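(* Let $b>0$ and let $R>0$ be such that, for the functions \[ \begin{aligned} \underline u_{\rm out}(r) &= Lr^{-m} - br^{-l} \log \frac{r}{R},\\ \underline v_{\rm out}(r) &= m(n-2-m)Lr^{-m-2} +\Big[- l(n-2-l) \log \frac{r}{R} + (n-2-2l)\Big]br^{-l-2},\\ \underline w_{\rm out}(r) &= m(m+2)(n-2-m)(n-4-m)Lr^{-m-4} - l(l+2)(n-2-l)(n-4-l)br^{-l-4} \log \frac{r}{R} \\ &\qquad + (n-2-2l)(l+2)(n-4-l) b r^{-l-4}, \end{aligned} \] the numbers $\underline r_1 = \sup\{ r>0 : \underline u_{\rm out}(r) \leqslant 0 \}$, $\underline r_2 = \sup\{ r>0 : \underline v_{\rm out}(r) \leqslant 0 \}$, $\underline r_3 = \sup\{ r>0 : \underline w_{\rm out}(r) \leqslant 0 \}$ are well defined and satisfy $R<\underline r_1<\underline r_2<\underline r_3<+\infty$. Then \[ -\Delta \underline u_{\rm out} = \underline v_{\rm out} \ \text{ for all } r>0,\qquad -\Delta \underline v_{\rm out} = \underline w_{\rm out} \ \text{ for all } r>0,\qquad -\Delta \underline w_{\rm out} \leqslant \underline u_{\rm out}^p \ \text{ for all } r>\underline r_1 . \]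
   Context: Let $n\geqslant 15$ and $p=p_{\mathsf{JL}}(6,n)$, where $p_{\mathsf{JL}}(6,n)=\frac{(n+4)\sqrt{3} - \sqrt{\sqrt[3]{K_0+K_1}+ \sqrt[3]{K_0-K_1} + 3n^2+32 }}{(n-8)\sqrt{3} - \sqrt{\sqrt[3]{K_0+K_1} + \sqrt[3]{K_0-K_1} + 3n^2+32 }}$ with $2K_0 =-27n^6+324 n^5-756n^4-2592 n^3 + 25776 n^2 +5184 n -23744$, $2K_1 = \sqrt{(2K_0)^2 - 4(192n^2+256)^3}$. Let $m=6/(p-1)$, $L=\big(m(m+2)(m+4)(n-2-m)(n-4-m)(n-6-m)\big)^{1/(p-1)}$, let $\lambda_3$ be the smallest positive root of $P(\lambda)=(m+\lambda)(m+\lambda+2)(m+\lambda+4)(n-2-m-\lambda)(n-4-m-\lambda)(n-6-m-\lambda)-pL^{p-1}$, and set $l=m+\lambda_3$. For a function $f$ of $r=|x|$, $\Delta f$ denotes the Laplacian in $\mathbf R^n$ of $x\mapsto f(|x|)$, i.e. $f''+\frac{n-1}{r}f'$. *)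

theory Defs
  imports "HOL-Analysis.Analysis"
begin

definition K0 :: "nat \<Rightarrow> real" where
  "K0 n = (let x = real n in
     (-27*x^6 + 324*x^5 - 756*x^4 - 2592*x^3 + 25776*x^2 + 5184*x - 23744) / 2)"

definition K1 :: "nat \<Rightarrow> real" where
  "K1 n = (let x = real n in sqrt ((2 * K0 n)^2 - 4 * (192*x^2 + 256)^3) / 2)"

definition pJL :: "nat \<Rightarrow> real" where
  "pJL n = (let x = real n;
                S = sqrt (root 3 (K0 n + K1 n) + root 3 (K0 n - K1 n) + 3*x^2 + 32)
            in ((x + 4) * sqrt 3 - S) / ((x - 8) * sqrt 3 - S))"

definition mexp :: "nat \<Rightarrow> real" where
  "mexp n = 6 / (pJL n - 1)"

definition Lc :: "nat \<Rightarrow> real" where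
  "Lc n = (let m = mexp n; x = real n in
     (m*(m+2)*(m+4)*(x-2-m)*(x-4-m)*(x-6-m)) powr (1 / (pJL n - 1)))"

definition Ppoly :: "nat \<Rightarrow> real \<Rightarrow> real" where
  "Ppoly n lam = (let m = mexp n; x = real n in
     (m+lam)*(m+lam+2)*(m+lam+4)*(x-2-m-lam)*(x-4-m-lam)*(x-6-m-lam)
       - pJL n * (Lc n) powr (pJL n - 1))"

definition lam3 :: "nat \<Rightarrow> real" where
  "lam3 n = (LEAST lam. lam > 0 \<and> Ppoly n lam = 0)"

definition lexp :: "nat \<Rightarrow> real" where
  "lexp n = mexp n + lam3 n"

definition rad_lap :: "nat \<Rightarrow> (real \<Rightarrow> real) \<Rightarrow> real \<Rightarrow> real" where
  "rad_lap n f r = deriv (deriv f) r + (real n - 1) / r * deriv f r"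

definition u_out :: "nat \<Rightarrow> real \<Rightarrow> real \<Rightarrow> real \<Rightarrow> real" where
  "u_out n b R r = Lc n * r powr (- mexp n) - b * r powr (- lexp n) * ln (r / R)"

definition v_out :: "nat \<Rightarrow> real \<Rightarrow> real \<Rightarrow> real \<Rightarrow> real" where
  "v_out n b R r = (let m = mexp n; l = lexp n; x = real n in
     m*(x-2-m) * Lc n * r powr (-m-2)
     + (- l*(x-2-l) * ln (r / R) + (x-2-2*l)) * b * r powr (-l-2))"

definition w_out :: "nat \<Rightarrow> real \<Rightarrow> real \<Rightarrow> real \<Rightarrow> real" where
  "w_out n b R r = (let m = mexp n; l = lexp n; x = real n in
     m*(m+2)*(x-2-m)*(x-4-m) * Lc n * r powr (-m-4)
     - l*(l+2)*(x-2-l)*(x-4-l) * b * r powr (-l-4) * ln (r / R)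
     + (x-2-2*l)*(l+2)*(x-4-l) * b * r powr (-l-4))"

end

theory Submission imports Defs begin
lemma s_range:
  fixes x s :: real assumes x: "x \<ge> 15"
  and g: "((x+4)^2 - s) * (x^2 - s) * ((x-4)^2 - s) = ((x-6)*(x-2)*(x+2))^2"
  shows "0 < s \<and> s < (x-8)^2"
proof -
  define P where "P = ((x-6)*(x-2)*(x+2))^2"
  define t where "t = x - 15"
  have t: "t \<ge> 0" using x t_def by simp
  have xt: "x = t + 15" using t_def by simp
  have sq: "0 \<le> (x+4)^2" "0 \<le> x^2" "0 \<le> (x-4)^2" by auto
  have o1: "(x-8)^2 \<le> (x-4)^2" "(x-4)^2 \<le> x^2" "x^2 \<le> (x+4)^2" 
    using x by (intro power_mono; simp)+
  have s0: "s > 0"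
  proof (rule ccontr)
    assume "\<not> s > 0" hence s: "s \<le> 0" by simp
    have "(x+4)^2 * x^2 \<le> ((x+4)^2 - s) * (x^2 - s)"
      by (rule mult_mono) (insert s sq, (linarith | (intro mult_nonneg_nonneg; linarith)))+
    hence "(x+4)^2 * x^2 * (x-4)^2 \<le> ((x+4)^2 - s) * (x^2 - s) * ((x-4)^2 - s)"
      by (rule mult_mono) (insert s sq, (linarith | (intro mult_nonneg_nonneg; linarith)))+
    moreover have "P < (x+4)^2 * x^2 * (x-4)^2"
    proof -
      have "(x+4)^2 * x^2 * (x-4)^2 - P = (2*t^3+84*t^2+1150*t+5124) * (6*t^2 + 168*t + 1146)"
        unfolding P_def xt by algebra
      also have "\<dots> > 0" using t by (intro mult_pos_pos) (simp add: add_nonneg_pos)+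
      finally show ?thesis by simp
    qed
    ultimately show False using g unfolding P_def by linarith
  qed
  have Ppos: "P > 0" unfolding P_def using x by simp
  have s1: "s < (x-8)^2"
  proof (rule ccontr)
    assume "\<not> s < (x-8)^2" hence s: "s \<ge> (x-8)^2" by simp
    have "((x+4)^2 - s) * (x^2 - s) * ((x-4)^2 - s) < P"
    proof (cases "s \<le> (x-4)^2")
      case True
      have "((x+4)^2 - s) * (x^2 - s) \<le> ((x+4)^2 - (x-8)^2) * (x^2 - (x-8)^2)"
        by (rule mult_mono) (use True s o1 in linarith)+
      hence "((x+4)^2 - s) * (x^2 - s) * ((x-4)^2 - s) \<le> ((x+4)^2 - (x-8)^2) * (x^2 - (x-8)^2) * ((x-4)^2 - (x-8)^2)"
        by (rule mult_mono) (insert True s o1, (linarith | (intro mult_nonneg_nonneg; linarith)))+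
      also have "\<dots> < P"
      proof -
        have "P - ((x+4)^2 - (x-8)^2) * (x^2 - (x-8)^2) * ((x-4)^2 - (x-8)^2)
           = (t+9)*(t+13)*(t^4+56*t^3+1154*t^2+7264*t+21)"
          unfolding P_def xt by algebra
        also have "\<dots> > 0" using t by (intro mult_pos_pos) (simp add: add_nonneg_pos)+
        finally show ?thesis by simp
      qed
      finally show ?thesis .
    next
      case False
      have "((x+4)^2 - s) * (x^2 - s) * ((x-4)^2 - s) \<le> 16*x*(4*x+8)^2"
      proof (cases "s \<le> x^2")
        case True
        have "((x+4)^2 - s) * (x^2 - s) \<ge> 0" by (rule mult_nonneg_nonneg) (use True o1 in linarith)+
        hence "((x+4)^2 - s) * (x^2 - s) * ((x-4)^2 - s) \<le> 0" by (rule mult_nonneg_nonpos) (use False in linarith)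
        moreover have "0 \<le> 16*x*(4*x+8)^2" using x by simp
          ultimately show ?thesis by linarith
      next
        case F2: False
        show ?thesis
        proof (cases "s \<ge> (x+4)^2")
          case True
          have "((x+4)^2 - s) * (x^2 - s) \<ge> 0" by (rule mult_nonpos_nonpos) (use True F2 in linarith)+
          hence "((x+4)^2 - s) * (x^2 - s) * ((x-4)^2 - s) \<le> 0" by (rule mult_nonneg_nonpos) (use False in linarith)
          moreover have "0 \<le> 16*x*(4*x+8)^2" using x by simp
          ultimately show ?thesis by linarith
        next
          case F3: False
          have e: "((x+4)^2 - s) * (x^2 - s) * ((x-4)^2 - s) = ((x+4)^2 - s) * (s - x^2) * (s - (x-4)^2)"
            by algebra
          have "((x+4)^2 - s) * (s - x^2) = (4*x+8)^2 - (s - (x^2+4*x+8))^2" by algebra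
          hence a: "((x+4)^2 - s) * (s - x^2) \<le> (4*x+8)^2" by simp
          have b: "s - (x-4)^2 \<le> 16*x" using F3 by (simp add: power2_eq_square algebra_simps)
          have "((x+4)^2 - s) * (s - x^2) * (s - (x-4)^2) \<le> (4*x+8)^2 * (16*x)"
            by (rule mult_mono[OF a b]) (use False in simp_all)
          then show ?thesis unfolding e by (simp add: algebra_simps)
        qed
      qed
      also have "\<dots> < P"
      proof -
        have "P - 16*x*(4*x+8)^2 = (t+17)^2*(t^4+44*t^3+718*t^2+4892*t+9849)"
          unfolding P_def xt by algebra
        also have "\<dots> > 0" using t by (intro mult_pos_pos) (simp add: add_nonneg_pos)+
        finally show ?thesis by simp
      qed
      finally show ?thesis .
    qed
    then show False using g unfolding P_def by simp
  qed
  show ?thesis using s0 s1 by simp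
qed
lemma disc_pos:
  fixes x :: real assumes "x \<ge> 15"
  shows "(-27*x^6 + 324*x^5 - 756*x^4 - 2592*x^3 + 25776*x^2 + 5184*x - 23744)^2 - 4 * (192*x^2 + 256)^3 \<ge> 0"
proof -
  define t where "t = x - 15"
  have t: "t \<ge> 0" using assms t_def by simp
  have x: "x = t + 15" using t_def by simp
  have "(-27*x^6 + 324*x^5 - 756*x^4 - 2592*x^3 + 25776*x^2 + 5184*x - 23744)^2 - 4 * (192*x^2 + 256)^3
     = 10214160759983817 + 10585461850409628*t + 4894534148604354*t^2 + 1347076448060364*t^3 + 246965545626615*t^4 + 31863611628216*t^5 + 2971699904988*t^6 + 202081266936*t^7 + 9951685191*t^8 + 346289580*t^9 + 8084610*t^10 + 113724*t^11 + 729*t^12"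
    unfolding x by algebra
  also have "\<dots> \<ge> 0" using t by simp
  finally show ?thesis .
qed

lemma cardano:
  assumes n: "n \<ge> 15"
  defines "x \<equiv> real n"
  defines "Z \<equiv> root 3 (K0 n + K1 n) + root 3 (K0 n - K1 n)"
  shows "Z^3 - 3*(192*x^2+256)*Z - 2 * K0 n = 0"
proof -
  define Q where "Q = 192*x^2+256"
  have x: "x \<ge> 15" using n x_def by simp
  have K0e: "2 * K0 n = -27*x^6 + 324*x^5 - 756*x^4 - 2592*x^3 + 25776*x^2 + 5184*x - 23744"
    unfolding K0_def Let_def x_def by simp
  have D: "(2 * K0 n)^2 - 4 * Q^3 \<ge> 0"
    using disc_pos[OF x] unfolding K0e Q_def .
  have "(2 * K1 n)^2 = (2 * K0 n)^2 - 4 * Q^3"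
    unfolding K1_def Let_def Q_def[symmetric] x_def[symmetric] using D by simp
  hence KK: "(K0 n + K1 n) * (K0 n - K1 n) = Q^3" by algebra
  define u where "u = root 3 (K0 n + K1 n)"
  define v where "v = root 3 (K0 n - K1 n)"
  have Q0: "Q \<ge> 0" unfolding Q_def by simp
  have uv: "u * v = Q" unfolding u_def v_def real_root_mult[symmetric] KK
    using Q0 by (simp add: real_root_power_cancel)
  have u3: "u^3 = K0 n + K1 n" unfolding u_def by (simp add: odd_real_root_pow)
  have v3: "v^3 = K0 n - K1 n" unfolding v_def by (simp add: odd_real_root_pow)
  have "Z = u + v" unfolding Z_def u_def v_def ..
  hence "Z^3 = u^3 + v^3 + 3 * (u * v) * Z" by algebra
  thus ?thesis unfolding Q_def[symmetric] using u3 v3 uv by simp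
qed


lemma pJL_sigma:
  assumes n: "n \<ge> 15"
  defines "x \<equiv> real n"
  obtains \<sigma> where "0 < \<sigma>" "\<sigma> < x - 8" "pJL n = (x + 4 - \<sigma>) / (x - 8 - \<sigma>)"
    "((x+4)^2 - \<sigma>^2) * (x^2 - \<sigma>^2) * ((x-4)^2 - \<sigma>^2) = ((x-6)*(x-2)*(x+2))^2"
proof -
  have x: "x \<ge> 15" using n x_def by simp
  define Z where "Z = root 3 (K0 n + K1 n) + root 3 (K0 n - K1 n)"
  have f: "Z^3 - 3*(192*x^2+256)*Z - 2 * K0 n = 0" using cardano[OF n] unfolding Z_def x_def .
  have K0e: "2 * K0 n = -27*x^6 + 324*x^5 - 756*x^4 - 2592*x^3 + 25776*x^2 + 5184*x - 23744"
    unfolding K0_def Let_def x_def by simp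
  define s where "s = (Z + 3*x^2 + 32) / 3"
  have Zs: "Z = 3 * s - 3*x^2 - 32" unfolding s_def by (simp add: field_simps)
  have "Z^3 - 3*(192*x^2+256)*Z - 2 * K0 n = -27 * (((x+4)^2 - s) * (x^2 - s) * ((x-4)^2 - s) - ((x-6)*(x-2)*(x+2))^2)"
    unfolding K0e Zs by algebra
  hence g: "((x+4)^2 - s) * (x^2 - s) * ((x-4)^2 - s) = ((x-6)*(x-2)*(x+2))^2" using f by simp
  from s_range[OF x g] have s: "0 < s" "s < (x-8)^2" by auto
  define \<sigma> where "\<sigma> = sqrt s"
  have \<sigma>0: "0 < \<sigma>" unfolding \<sigma>_def using s by simp
  have \<sigma>1: "\<sigma> < x - 8"
  proof -
    have "sqrt s < sqrt ((x-8)^2)" using s(2) by (simp only: real_sqrt_less_iff)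
    also have "\<dots> = x - 8" using x by simp
    finally show ?thesis by (simp add: \<sigma>_def)
  qed
  have \<sigma>2: "\<sigma>^2 = s" unfolding \<sigma>_def using s by simp
  have S: "sqrt (root 3 (K0 n + K1 n) + root 3 (K0 n - K1 n) + 3*x^2 + 32) = sqrt 3 * \<sigma>"
    unfolding \<sigma>_def real_sqrt_mult[symmetric] s_def Z_def by simp
  have "pJL n = ((x + 4) * sqrt 3 - sqrt 3 * \<sigma>) / ((x - 8) * sqrt 3 - sqrt 3 * \<sigma>)"
    unfolding pJL_def Let_def x_def[symmetric] S ..
  also have "\<dots> = (sqrt 3 * (x + 4 - \<sigma>)) / (sqrt 3 * (x - 8 - \<sigma>))" by (simp add: algebra_simps)
  also have "\<dots> = (x + 4 - \<sigma>) / (x - 8 - \<sigma>)" by simp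
  finally show ?thesis using that \<sigma>0 \<sigma>1 g \<sigma>2 by simp
qed

definition ee :: "real \<Rightarrow> real \<Rightarrow> real" where
  "ee x a = a*(a+2)*(a+4)*(x-2-a)*(x-4-a)*(x-6-a)"

lemma ee_mono:
  assumes x: "x \<ge> 15" and a: "0 < a" "a < (x-6)/2"
  shows "ee x a < ee x ((x-6)/2)"
proof -
  define c where "c = (x-6)/2"
  define y where "y = a - c"
  have c0: "c > 0" unfolding c_def using x by simp
  have y1: "y^2 > 0" unfolding y_def c_def using a by simp
  have y2: "y^2 < c^2"
  proof -
    have "\<bar>y\<bar> = c - a" unfolding y_def c_def using a by simp
    hence "\<bar>y\<bar> < c" using a by simp
    hence "\<bar>y\<bar>^2 < c^2" by (intro power_strict_mono) auto
    thus ?thesis by simp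
  qed
  have c2: "c^2 \<le> (c+2)^2" "(c+2)^2 \<le> (c+4)^2" using c0 by (intro power_mono; simp)+
  have xc: "x = 2*c+6" unfolding c_def by (simp add: field_simps)
  have ay: "a = y + c" unfolding y_def by simp
  have ea: "ee x a = (c^2 - y^2) * ((c+2)^2 - y^2) * ((c+4)^2 - y^2)"
    unfolding ee_def xc ay by algebra
  have ec: "ee x c = c^2 * (c+2)^2 * (c+4)^2"
    unfolding ee_def xc by algebra
  have f1: "c^2 - y^2 < c^2" "(c+2)^2 - y^2 < (c+2)^2" "(c+4)^2 - y^2 < (c+4)^2" using y1 by auto
  have f2: "0 \<le> c^2 - y^2" "0 \<le> (c+2)^2 - y^2" "0 \<le> (c+4)^2 - y^2" using y2 c2 by auto
  have f3: "0 < c^2" "0 < (c+2)^2" "0 < c^2 * (c+2)^2" using c0 by auto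
  have "(c^2 - y^2) * ((c+2)^2 - y^2) < c^2 * (c+2)^2"
    by (rule mult_strict_mono[OF f1(1) f1(2) f3(1) f2(2)])
  hence "(c^2 - y^2) * ((c+2)^2 - y^2) * ((c+4)^2 - y^2) < c^2 * (c+2)^2 * (c+4)^2"
    by (rule mult_strict_mono[OF _ f1(3) f3(3) f2(3)])
  thus ?thesis unfolding ea c_def[symmetric] ec .
qed

lemma consts_facts:
  assumes n: "n \<ge> 15"
  defines "x \<equiv> real n"
  shows "pJL n > 1 \<and> mexp n > 0 \<and> mexp n * (pJL n - 1) = 6 \<and> Lc n > 0
    \<and> ee x (mexp n) > 0 \<and> Lc n powr (pJL n - 1) = ee x (mexp n)
    \<and> pJL n * ee x (mexp n) = ee x (lexp n) \<and> lexp n = (x-6)/2"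
proof -
  have x: "x \<ge> 15" using n x_def by simp
  obtain \<sigma> where s0: "0 < \<sigma>" and s1: "\<sigma> < x - 8" and p: "pJL n = (x + 4 - \<sigma>) / (x - 8 - \<sigma>)"
    and g: "((x+4)^2 - \<sigma>^2) * (x^2 - \<sigma>^2) * ((x-4)^2 - \<sigma>^2) = ((x-6)*(x-2)*(x+2))^2"
    using pJL_sigma[OF n] unfolding x_def by blast
  have d0: "x - 8 - \<sigma> > 0" using s1 by simp
  have p1: "pJL n - 1 = 12 / (x - 8 - \<sigma>)" unfolding p using d0 by (simp add: field_simps)
  have "12 / (x - 8 - \<sigma>) > 0" using d0 by simp
  hence pg1: "pJL n > 1" using p1 by linarith
  have m: "mexp n = (x - 8 - \<sigma>) / 2" unfolding mexp_def p1 using d0 by simp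
  have m0: "mexp n > 0" using m d0 by simp
  have mp: "mexp n * (pJL n - 1) = 6" unfolding m p1 using d0 by (simp add: field_simps)
  have h: "mexp n < x - 6" unfolding m using s0 s1 by (simp add: field_simps)
  have em: "ee x (mexp n) > 0" unfolding ee_def using m0 h
    by (intro mult_pos_pos; linarith)
  have L0: "Lc n > 0" unfolding Lc_def Let_def x_def[symmetric] ee_def[symmetric] using em by simp
  have Lp: "Lc n powr (pJL n - 1) = ee x (mexp n)"
    unfolding Lc_def Let_def x_def[symmetric] using em pg1 unfolding ee_def[symmetric]
    by (simp add: powr_powr)
  have pe: "pJL n * ee x (mexp n) = ee x ((x-6)/2)"
  proof -
    have "pJL n = (mexp n + 6) / mexp n" unfolding p m using d0 by (simp add: field_simps)
    hence pm: "pJL n * mexp n = mexp n + 6" using m0 by simp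
    define R where "R = (mexp n+2)*(mexp n+4)*(x-2-mexp n)*(x-4-mexp n)*(x-6-mexp n)"
    have "ee x (mexp n) = mexp n * R" unfolding ee_def R_def by (simp add: algebra_simps)
    hence "pJL n * ee x (mexp n) = (pJL n * mexp n) * R" by simp
    hence "pJL n * ee x (mexp n) = (mexp n + 6) * (mexp n+2)*(mexp n+4)*(x-2-mexp n)*(x-4-mexp n)*(x-6-mexp n)"
      unfolding pm R_def by (simp add: algebra_simps)
    also have "\<dots> = ((x+4)^2 - \<sigma>^2) * (x^2 - \<sigma>^2) * ((x-4)^2 - \<sigma>^2) / 64"
      unfolding m by (simp add: field_simps) algebra
    also have "\<dots> = ((x-6)*(x-2)*(x+2))^2 / 64" unfolding g ..
    also have "\<dots> = ee x ((x-6)/2)" unfolding ee_def by (simp add: field_simps) algebra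
    finally show ?thesis .
  qed
  have Pp: "Ppoly n lam = ee x (mexp n + lam) - pJL n * ee x (mexp n)" for lam
    unfolding Ppoly_def Let_def x_def[symmetric] Lp ee_def by (simp add: algebra_simps)
  have lam: "lam3 n = (x-6)/2 - mexp n"
    unfolding lam3_def
  proof (rule Least_equality)
    show "(x-6)/2 - mexp n > 0 \<and> Ppoly n ((x-6)/2 - mexp n) = 0"
    proof
      show "(x-6)/2 - mexp n > 0" using m s0 by (simp add: field_simps)
      show "Ppoly n ((x-6)/2 - mexp n) = 0" unfolding Pp pe by simp
    qed
    fix y assume y: "y > 0 \<and> Ppoly n y = 0"
    show "(x-6)/2 - mexp n \<le> y"
    proof (rule ccontr)
      assume a: "\<not> ?thesis"
      have "mexp n + y < (x-6)/2" using a by linarith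
      moreover have "0 < mexp n + y" using y m0 by linarith
      ultimately have "ee x (mexp n + y) < ee x ((x-6)/2)" by (intro ee_mono[OF x])
      thus False using y unfolding Pp pe by simp
    qed
  qed
  have l: "lexp n = (x-6)/2" unfolding lexp_def lam by simp
  show ?thesis using pg1 m0 mp L0 em Lp pe l by (simp only: l)
qed

definition GG :: "real \<Rightarrow> real \<Rightarrow> real \<Rightarrow> real \<Rightarrow> real \<Rightarrow> real \<Rightarrow> real \<Rightarrow> real" where
 "GG R A \<alpha> B C \<beta> r = A * r powr (-\<alpha>) + B * r powr (-\<beta>) + C * r powr (-\<beta>) * ln (r/R)"

lemma powr_m1: assumes "r > (0::real)" shows "r powr (-a - 1) = r powr (-a) / r"
  using assms by (simp add: powr_diff)

lemma powr_m1': assumes "r > (0::real)" shows "r powr (-(a+1)) = r powr (-a) / r"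
proof -
  have "-(a+1) = -a - 1" by simp
  thus ?thesis by (simp only: powr_m1[OF assms])
qed

lemma GG_deriv:
  assumes r: "r > 0" and R: "R > 0"
  shows "(GG R A \<alpha> B C \<beta> has_real_derivative GG R (-A*\<alpha>) (\<alpha>+1) (C - B*\<beta>) (-C*\<beta>) (\<beta>+1) r) (at r)"
proof -
  have d: "(GG R A \<alpha> B C \<beta> has_real_derivative
      A * (-\<alpha> * r powr (-\<alpha> - 1)) + B * (-\<beta> * r powr (-\<beta> - 1)) + C * ((-\<beta> * r powr (-\<beta> - 1)) * ln (r/R) + r powr (-\<beta>) * (1/r))) (at r)"
    unfolding GG_def[abs_def] using r R by (auto intro!: derivative_eq_intros simp: field_simps)
  have e: "A * (-\<alpha> * r powr (-\<alpha> - 1)) + B * (-\<beta> * r powr (-\<beta> - 1)) + C * ((-\<beta> * r powr (-\<beta> - 1)) * ln (r/R) + r powr (-\<beta>) * (1/r))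
     = GG R (-A*\<alpha>) (\<alpha>+1) (C - B*\<beta>) (-C*\<beta>) (\<beta>+1) r"
    unfolding GG_def powr_m1[OF r] powr_m1'[OF r]
    using r by (simp add: field_simps)
  show ?thesis using d e by (rule DERIV_cong)
qed


lemma powr_m2: assumes "r > (0::real)" shows "r powr (-(a+2)) = r powr (-a) / r / r"
proof -
  have "-(a+2) = -((a+1)+1)" by simp
  thus ?thesis by (simp only: powr_m1'[OF assms])
qed

lemma GG_lap:
  assumes r: "r > 0" and R: "R > 0"
  shows "rad_lap n (GG R A \<alpha> B C \<beta>) r =
     GG R (A*\<alpha>*(\<alpha>+2-real n)) (\<alpha>+2) (-C*\<beta> - (C - B*\<beta>)*(\<beta>+1) + (real n-1)*(C - B*\<beta>)) (C*\<beta>*(\<beta>+2-real n)) (\<beta>+2) r"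
proof -
  define G1 where "G1 = GG R (-A*\<alpha>) (\<alpha>+1) (C - B*\<beta>) (-C*\<beta>) (\<beta>+1)"
  define G2 where "G2 = GG R (-(-A*\<alpha>)*(\<alpha>+1)) (\<alpha>+1+1) ((-C*\<beta>) - (C - B*\<beta>)*(\<beta>+1)) (-(-C*\<beta>)*(\<beta>+1)) (\<beta>+1+1)"
  have d1: "deriv (GG R A \<alpha> B C \<beta>) y = G1 y" if "y > 0" for y
    unfolding G1_def by (rule DERIV_imp_deriv[OF GG_deriv[OF that R]])
  have "(G1 has_real_derivative G2 r) (at r)"
    unfolding G1_def G2_def by (rule GG_deriv[OF r R])
  hence "(deriv (GG R A \<alpha> B C \<beta>) has_real_derivative G2 r) (at r)"
    by (rule has_field_derivative_transform_within_open[where S="{0<..}"]) (use r d1 in auto)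
  hence d2: "deriv (deriv (GG R A \<alpha> B C \<beta>)) r = G2 r" by (rule DERIV_imp_deriv)
  have "rad_lap n (GG R A \<alpha> B C \<beta>) r = G2 r + (real n - 1) / r * G1 r"
    unfolding rad_lap_def d2 d1[OF r] ..
  also have "\<dots> = GG R (A*\<alpha>*(\<alpha>+2-real n)) (\<alpha>+2) (-C*\<beta> - (C - B*\<beta>)*(\<beta>+1) + (real n-1)*(C - B*\<beta>)) (C*\<beta>*(\<beta>+2-real n)) (\<beta>+2) r"
    unfolding G1_def G2_def GG_def powr_m1'[OF r] powr_m2[OF r] add.assoc one_add_one
    using r by (simp add: field_simps)
  finally show ?thesis .
qed

lemma powr_tangent:
  fixes p L X :: real
  assumes p: "p \<ge> 1" and L: "L > 0" and X: "X > 0"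
  shows "X powr p \<ge> L powr p + p * L powr (p-1) * (X - L)"
proof -
  have "X powr p - L powr p \<ge> (p * L powr (p-1)) * (X - L)"
    by (rule convex_on_imp_above_tangent[OF powr_convex[OF p]])
       (use L X in \<open>auto simp: interior_open intro!: has_field_derivative_at_within has_real_derivative_powr\<close>)
  thus ?thesis by simp
qed

lemma GG_neg: "- GG R A \<alpha> B C \<beta> r = GG R (-A) \<alpha> (-B) (-C) \<beta> r"
  unfolding GG_def by simp

lemma GG_cong: "A = A' \<Longrightarrow> B = B' \<Longrightarrow> C = C' \<Longrightarrow> GG R A \<alpha> B C \<beta> r = GG R A' \<alpha> B' C' \<beta> r"
  by simp


theorem lemma4p2:
  fixes n :: nat and b R :: real
  assumes "n \<ge> 15" and "b > 0" and "R > 0"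
    and "{r. r > 0 \<and> u_out n b R r \<le> 0} \<noteq> {}" and "bdd_above {r. r > 0 \<and> u_out n b R r \<le> 0}"
    and "{r. r > 0 \<and> v_out n b R r \<le> 0} \<noteq> {}" and "bdd_above {r. r > 0 \<and> v_out n b R r \<le> 0}"
    and "{r. r > 0 \<and> w_out n b R r \<le> 0} \<noteq> {}" and "bdd_above {r. r > 0 \<and> w_out n b R r \<le> 0}"
    and "R < Sup {r. r > 0 \<and> u_out n b R r \<le> 0}"
    and "Sup {r. r > 0 \<and> u_out n b R r \<le> 0} < Sup {r. r > 0 \<and> v_out n b R r \<le> 0}"
    and "Sup {r. r > 0 \<and> v_out n b R r \<le> 0} < Sup {r. r > 0 \<and> w_out n b R r \<le> 0}"
  shows "(\<forall>r>0. - rad_lap n (u_out n b R) r = v_out n b R r)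
       \<and> (\<forall>r>0. - rad_lap n (v_out n b R) r = w_out n b R r)
       \<and> (\<forall>r > Sup {r. r > 0 \<and> u_out n b R r \<le> 0}.
            - rad_lap n (w_out n b R) r \<le> (u_out n b R r) powr (pJL n))"
proof -
  note n = assms(1) and b = assms(2) and R = assms(3)
  define x where "x = real n"
  define m where "m = mexp n"
  define l where "l = lexp n"
  define L where "L = Lc n"
  define p where "p = pJL n"
  define E where "E = ee x m"
  have cf: "p > 1" "m > 0" "m * (p - 1) = 6" "L > 0" "E > 0" "L powr (p - 1) = E"
    "p * E = ee x l" "l = (x-6)/2"
    using consts_facts[OF n] unfolding x_def[symmetric] m_def[symmetric] l_def[symmetric]
      L_def[symmetric] p_def[symmetric] E_def[symmetric] by auto
  have xl: "x = 2*l + 6" using cf(8) by simp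
  have uG: "u_out n b R = GG R L m 0 (-b) l"
    by (rule ext) (simp add: u_out_def GG_def m_def l_def L_def)
  have vG: "v_out n b R = GG R (m*(x-2-m)*L) (m+2) ((x-2-2*l)*b) (-l*(x-2-l)*b) (l+2)"
    by (rule ext) (simp add: v_out_def GG_def m_def l_def L_def x_def Let_def algebra_simps)
  have wG: "w_out n b R = GG R (m*(m+2)*(x-2-m)*(x-4-m)*L) (m+2+2) ((x-2-2*l)*(l+2)*(x-4-l)*b)
       (-l*(l+2)*(x-2-l)*(x-4-l)*b) (l+2+2)"
    by (rule ext) (simp add: w_out_def GG_def m_def l_def L_def x_def Let_def algebra_simps)
  have P1: "- rad_lap n (u_out n b R) r = v_out n b R r" if r: "r > 0" for r
    unfolding uG vG GG_lap[OF r R] GG_neg x_def[symmetric]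
    by (rule GG_cong) (simp_all add: algebra_simps)
  have P2: "- rad_lap n (v_out n b R) r = w_out n b R r" if r: "r > 0" for r
    unfolding wG vG GG_lap[OF r R] GG_neg x_def[symmetric]
    by (rule GG_cong) (simp_all add: xl algebra_simps)
  have W: "- rad_lap n (w_out n b R) r = GG R (E*L) (m+2+2+2) 0 (-(p*E)*b) (l+2+2+2) r" if r: "r > 0" for r
    unfolding wG GG_lap[OF r R] GG_neg x_def[symmetric] cf(7)
    by (rule GG_cong) (simp_all add: xl E_def ee_def algebra_simps)
  have P3: "- rad_lap n (w_out n b R) r \<le> (u_out n b R r) powr p"
    if r1: "r > Sup {r. r > 0 \<and> u_out n b R r \<le> 0}" for r
  proof -
    have r: "r > 0" using r1 assms(10) R by linarith
    have u0: "u_out n b R r > 0"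
    proof (rule ccontr)
      assume "\<not> ?thesis"
      hence "r \<in> {r. r > 0 \<and> u_out n b R r \<le> 0}" using r by simp
      hence "r \<le> Sup {r. r > 0 \<and> u_out n b R r \<le> 0}" using assms(5) by (rule cSup_upper)
      thus False using r1 by simp
    qed
    define q where "q = r powr (-m)"
    define s6 where "s6 = r powr (-6)"
    define rl where "rl = r powr (-l)"
    have q0: "q > 0" and s60: "s6 > 0" using r unfolding q_def s6_def by auto
    have e1: "r powr (-(m+2+2+2)) = q * s6" unfolding q_def s6_def powr_add[symmetric] by (rule arg_cong[where f="\<lambda>a. r powr a"]) simp
    have e2: "r powr (-(l+2+2+2)) = rl * s6" unfolding rl_def s6_def powr_add[symmetric] by (rule arg_cong[where f="\<lambda>a. r powr a"]) simp
    have uq: "u_out n b R r = L*q - b * rl * ln(r/R)"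
      unfolding u_out_def q_def rl_def L_def m_def l_def ..
    define X where "X = u_out n b R r / q"
    have X0: "X > 0" unfolding X_def using u0 q0 by simp
    have uX: "u_out n b R r = q * X" unfolding X_def using q0 by simp
    have mp: "-m*p = -m + -6" using cf(3) by (simp add: algebra_simps)
    have qp: "q powr p = q * s6" unfolding q_def s6_def powr_powr mp powr_add ..
    have Lp: "L powr p = L * E"
    proof -
      have "L powr p = L powr (1 + (p - 1))" by simp
      also have "\<dots> = L * E" unfolding powr_add cf(6) using cf(4) by simp
      finally show ?thesis .
    qed
    have "(u_out n b R r) powr p = q powr p * X powr p"
      unfolding uX using q0 X0 by (simp add: powr_mult)
    also have "\<dots> \<ge> q powr p * (L powr p + p * L powr (p-1) * (X - L))"
      using powr_tangent[of p L X] cf(1) cf(4) X0 q0 by (intro mult_left_mono) auto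
    finally have ineq: "(u_out n b R r) powr p \<ge> q * s6 * (L * E + p * E * (X - L))"
      unfolding qp Lp cf(6) .
    have "q * s6 * (L * E + p * E * (X - L)) = s6 * (E * L * q + p * E * (q * X - L * q))"
      by (simp add: algebra_simps)
    also have "\<dots> = - rad_lap n (w_out n b R) r"
      unfolding W[OF r] GG_def e1 e2 uX[symmetric] uq by (simp add: algebra_simps)
    finally show ?thesis using ineq by simp
  qed
  show ?thesis using P1 P2 P3 unfolding p_def by blast
qed
end
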